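(* Let $k\in\mathbb{N}$, $x\ge1$ and $V\ge x^{1/k}$. Then for every $n\in\mathbb{N}$ with $n\le x$, \[ \mathbf{1}_{\mathbb{P}}(n)=\sum_{j=1}^k(-1)^{j-1}\binom kj\big(\mu_{\le V}^{*j}*\mathbf{1}^{*(j-1)}*\omega\big)(n). \]
   Context: $\mathbf{1}_{\mathbb{P}}$ is the indicator function of the primes; $\mu$ is the Möbius function and $\mu_{\le V}(n):=\mu(n)$ if $n\le V$ and $0$ otherwise; $\mathbf{1}(n)=1$ for all $n$; $\omega(n)$ is the number of distinct prime divisors of $n$. $*$ is Dirichlet convolution, $g^{*j}$ is the $j$-fold convolution of $g$ with itself, and $g^{*0}$ is the identity $\delta$ ($\delta(1)=1$, $\delta(n)=0$ for $n>1$). *)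

theory Defs
  imports "HOL-Computational_Algebra.Computational_Algebra"
begin

text \<open>Arithmetic functions are functions nat \<Rightarrow> int, meaningful on positive integers.\<close>

definition dconv :: "(nat \<Rightarrow> int) \<Rightarrow> (nat \<Rightarrow> int) \<Rightarrow> nat \<Rightarrow> int" (infixl "\<star>" 70) where
  "dconv f g n = (\<Sum>d \<in> {d. d dvd n}. f d * g (n div d))"

definition dirichlet_delta :: "nat \<Rightarrow> int" where
  "dirichlet_delta n = (if n = 1 then 1 else 0)"

fun dpow :: "(nat \<Rightarrow> int) \<Rightarrow> nat \<Rightarrow> nat \<Rightarrow> int" where
  "dpow g 0 = dirichlet_delta"
| "dpow g (Suc j) = dconv g (dpow g j)"

definition moebius :: "nat \<Rightarrow> int" where
  "moebius n = (if n = 0 then 0 else if squarefree n then (-1) ^ card (prime_factors n) else 0)"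

definition moebius_le :: "real \<Rightarrow> nat \<Rightarrow> int" where
  "moebius_le V n = (if real n \<le> V then moebius n else 0)"

definition one_fn :: "nat \<Rightarrow> int" where
  "one_fn n = 1"

definition omega_fn :: "nat \<Rightarrow> int" where
  "omega_fn n = int (card (prime_factors n))"

definition prime_ind :: "nat \<Rightarrow> int" where
  "prime_ind n = (if prime n then 1 else 0)"

end

theory Submission
  imports Defs
begin


lemma dconv_0 [simp]: "dconv f g 0 = 0"
  by (simp add: dconv_def)

lemma dconv_cong:
  assumes "\<And>m. m > 0 \<Longrightarrow> f m = f' m" "\<And>m. m > 0 \<Longrightarrow> g m = g' m"
  shows "dconv f g n = dconv f' g' n"
proof (cases "n = 0")
  case False
  show ?thesis unfolding dconv_def
  proof (rule sum.cong)
    fix d assume "d \<in> {d. d dvd n}"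
    then have "d > 0" "n div d > 0" using False
      by (auto intro: Nat.gr0I simp: dvd_div_eq_0_iff)
    then show "f d * g (n div d) = f' d * g' (n div d)" using assms by simp
  qed simp
qed simp

lemma dconv_comm: "dconv f g n = dconv g f n"
proof (cases "n = 0")
  case False
  show ?thesis unfolding dconv_def
    by (rule sum.reindex_bij_witness[where i="\<lambda>d. n div d" and j="\<lambda>d. n div d"])
       (use False in \<open>auto simp: dvd_div_eq_0_iff intro: dvd_div_eq_mult\<close>)
qed simp

lemma dconv_assoc: "dconv (dconv f g) h n = dconv f (dconv g h) n"
proof (cases "n = 0")
  case False
  have fin: "finite {d. d dvd m}" if "m > 0" for m :: nat using that by simp
  have "dconv (dconv f g) h n = (\<Sum>d\<in>{d. d dvd n}. \<Sum>e\<in>{e. e dvd d}. f e * g (d div e) * h (n div d))"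
    unfolding dconv_def by (simp add: sum_distrib_right)
  also have "\<dots> = (\<Sum>(d,e)\<in>Sigma {d. d dvd n} (\<lambda>d. {e. e dvd d}). f e * g (d div e) * h (n div d))"
    using False by (subst sum.Sigma) (auto intro!: fin intro: Nat.gr0I)
  also have "\<dots> = (\<Sum>(e,c)\<in>Sigma {e. e dvd n} (\<lambda>e. {c. c dvd n div e}). f e * (g c * h (n div e div c)))"
  proof (rule sum.reindex_bij_witness[where i="\<lambda>(e,c). (e*c, e)" and j="\<lambda>(d,e). (e, d div e)"])
    fix a assume "a \<in> Sigma {d. d dvd n} (\<lambda>d. {e. e dvd d})"
    then obtain d e where a: "a = (d,e)" "d dvd n" "e dvd d" by auto
    then have "d > 0" using False by (auto intro: Nat.gr0I)
    then have "e > 0" using a by (auto intro: Nat.gr0I)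
    show "(case case a of (d, e) \<Rightarrow> (e, d div e) of (e, c) \<Rightarrow> (e * c, e)) = a"
      using a by auto
    show "(case a of (d, e) \<Rightarrow> (e, d div e)) \<in> Sigma {e. e dvd n} (\<lambda>e. {c. c dvd n div e})"
      using a by (auto intro: dvd_trans div_dvd_div)
    have "n div e div (d div e) = n div d"
      using a \<open>e > 0\<close> by (metis div_div_eq_right dvd_div_mult_self div_mult2_eq dvd_mult_div_cancel mult.commute)
    then show "(case case a of (d, e) \<Rightarrow> (e, d div e) of (e, c) \<Rightarrow> f e * (g c * h (n div e div c))) =
         (case a of (d, e) \<Rightarrow> f e * g (d div e) * h (n div d))"
      using a by simp
  next
    fix b assume "b \<in> Sigma {e. e dvd n} (\<lambda>e. {c. c dvd n div e})"
    then obtain e c where b: "b = (e,c)" "e dvd n" "c dvd n div e" by auto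
    then have "e > 0" using False by (auto intro: Nat.gr0I)
    show "(case case b of (e, c) \<Rightarrow> (e * c, e) of (d, e) \<Rightarrow> (e, d div e)) = b"
      using b \<open>e > 0\<close> by auto
    show "(case b of (e, c) \<Rightarrow> (e * c, e)) \<in> Sigma {d. d dvd n} (\<lambda>d. {e. e dvd d})"
    proof -
      have "e * c dvd n" using b \<open>e > 0\<close> by (metis dvd_div_iff_mult mult.commute neq0_conv)
      then show ?thesis using b by auto
    qed
  qed
  also have "\<dots> = dconv f (dconv g h) n"
    unfolding dconv_def using False
    by (subst sum.Sigma[symmetric]) (auto intro!: fin intro: Nat.gr0I simp: sum_distrib_left dvd_div_eq_0_iff)
  finally show ?thesis .
qed simp

lemma dconv_delta_right: "n > 0 \<Longrightarrow> dconv f dirichlet_delta n = f n"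
proof -
  assume n: "n > 0"
  have "dconv f dirichlet_delta n = (\<Sum>d\<in>{d. d dvd n}. if d = n then f d else 0)"
    unfolding dconv_def dirichlet_delta_def
  proof (rule sum.cong)
    fix d assume "d \<in> {d. d dvd n}"
    then have dn: "d dvd n" by simp
    then have "d > 0" "d \<le> n" using n by (auto intro: Nat.gr0I dvd_imp_le)
    then have "n div d = 1 \<longleftrightarrow> d = n" using dn
      by (metis div_self dvd_mult_div_cancel mult.right_neutral neq0_conv)
    then show "f d * (if n div d = 1 then 1 else 0) = (if d = n then f d else 0)" by simp
  qed simp
  also have "\<dots> = f n" using n by (subst sum.delta) auto
  finally show ?thesis .
qed



typedef af = "{f :: nat \<Rightarrow> int. f 0 = 0}" morphisms apf Abs_af
  by (rule exI[of _ "\<lambda>_. 0"]) simp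

lemma apf_0 [simp]: "apf x 0 = 0"
  using apf[of x] by simp

lemma apf_inject': "(\<And>n. n > 0 \<Longrightarrow> apf x n = apf y n) \<Longrightarrow> x = y"
  by (metis apf_inject apf_0 neq0_conv ext)

lemma Abs_af_inverse' [simp]: "f 0 = 0 \<Longrightarrow> apf (Abs_af f) = f"
  by (simp add: Abs_af_inverse)

lemma dirichlet_delta_0 [simp]: "dirichlet_delta 0 = 0"
  by (simp add: dirichlet_delta_def)

instantiation af :: comm_ring_1
begin
definition "0 = Abs_af (\<lambda>_. 0)"
definition "1 = Abs_af dirichlet_delta"
definition "x + y = Abs_af (\<lambda>n. apf x n + apf y n)"
definition "x - y = Abs_af (\<lambda>n. apf x n - apf y n)"
definition "- x = Abs_af (\<lambda>n. - apf x n)"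
definition "x * y = Abs_af (dconv (apf x) (apf y))"

lemma apf_zero [simp]: "apf 0 n = 0" by (simp add: zero_af_def)
lemma apf_one [simp]: "apf 1 = dirichlet_delta" by (simp add: one_af_def)
lemma apf_plus [simp]: "apf (x + y) n = apf x n + apf y n" by (simp add: plus_af_def)
lemma apf_minus [simp]: "apf (x - y) n = apf x n - apf y n" by (simp add: minus_af_def)
lemma apf_uminus [simp]: "apf (- x) n = - apf x n" by (simp add: uminus_af_def)
lemma apf_times: "apf (x * y) = dconv (apf x) (apf y)" by (simp add: times_af_def)

instance
proof
  fix a b c :: af
  show "a * b * c = a * (b * c)" by (rule apf_inject') (simp add: apf_times dconv_assoc)
  show "a * b = b * a" by (rule apf_inject') (simp add: apf_times dconv_comm)
  show "1 * a = a" by (rule apf_inject') (simp add: apf_times dconv_comm[of dirichlet_delta] dconv_delta_right)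
  show "(a + b) * c = a * c + b * c"
    by (rule apf_inject') (simp add: apf_times dconv_def ring_distribs sum.distrib)
  show "a + b + c = a + (b + c)" by (rule apf_inject') simp
  show "a + b = b + a" by (rule apf_inject') simp
  show "0 + a = a" by (rule apf_inject') simp
  show "- a + a = 0" by (rule apf_inject') simp
  show "a - b = a + - b" by (rule apf_inject') simp
  show "(0::af) \<noteq> 1"
  proof
    assume "(0::af) = 1"
    then have "apf (0::af) 1 = apf 1 1" by simp
    then show False by (simp add: dirichlet_delta_def)
  qed
qed
end

definition A :: "(nat \<Rightarrow> int) \<Rightarrow> af" where
  "A f = Abs_af (\<lambda>n. if n = 0 then 0 else f n)"

lemma apf_A: "n > 0 \<Longrightarrow> apf (A f) n = f n"
  by (simp add: A_def)

lemma apf_A_times: "apf (A f * A g) n = dconv f g n"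
  unfolding apf_times by (rule dconv_cong) (simp_all add: apf_A)

lemma apf_times_A: "apf (x * y) n = dconv (apf x) (apf y) n"
  by (simp add: apf_times)

lemma dpow_0 [simp]: "dpow g j 0 = 0"
  by (cases j) auto

lemma A_dpow: "A (dpow g j) = A g ^ j"
proof (induction j)
  case 0
  show ?case by (rule apf_inject') (simp add: apf_A)
next
  case (Suc j)
  show ?case
  proof (rule apf_inject')
    fix n :: nat assume "n > 0"
    have "apf (A g ^ Suc j) n = apf (A g * A (dpow g j)) n" by (simp add: Suc)
    also have "\<dots> = dpow g (Suc j) n" by (simp add: apf_A_times)
    finally show "apf (A (dpow g (Suc j))) n = apf (A g ^ Suc j) n" using \<open>n > 0\<close> by (simp add: apf_A)
  qed
qed

lemma A_dconv: "A (dconv f g) = A f * A g"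
  by (rule apf_inject') (simp add: apf_A apf_A_times)

lemma A_diff: "A (\<lambda>n. f n - g n) = A f - A g"
  by (rule apf_inject') (simp add: apf_A)

lemma apf_sum: "apf (sum f S) n = (\<Sum>x\<in>S. apf (f x) n)"
  by (induction S rule: infinite_finite_induct) auto

lemma apf_of_nat_mult: "apf (of_nat c * x) n = int c * apf x n"
  by (induction c) (auto simp: ring_distribs)

lemma apf_of_int_mult: "apf (of_int c * x) n = c * apf x n"
proof (cases c rule: int_cases)
  case (nonneg m)
  then show ?thesis using apf_of_nat_mult[of m x n] by simp
next
  case (neg m)
  then show ?thesis using apf_of_nat_mult[of "Suc m" x n] by (simp del: of_nat_Suc)
qed



lemma squarefree_prod_pf:
  assumes "squarefree (d::nat)"
  shows "\<Prod>(prime_factors d) = d"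
proof -
  have d0: "d \<noteq> 0" using assms not_squarefree_0 by metis
  have "\<Prod>(prime_factors d) = (\<Prod>p\<in>prime_factors d. p ^ multiplicity p d)"
    using assms d0 by (intro prod.cong) (auto simp: squarefree_factorial_semiring')
  also have "\<dots> = d" using d0 by (simp add: prod_prime_factors)
  finally show ?thesis .
qed

lemma pf_prod_primes:
  assumes "finite T" "\<And>p. p \<in> T \<Longrightarrow> prime (p::nat)"
  shows "prime_factors (\<Prod>T) = T"
proof -
  have "0 \<notin> id ` T" by (metis assms(2) id_apply image_iff not_prime_0)
  then have "prime_factors (prod id T) = \<Union>((prime_factors \<circ> id) ` T)"
    using assms by (intro prime_factors_prod) auto
  also have "\<dots> = T" using assms by (auto simp: prime_prime_factors)
  finally show ?thesis by simp
qed

lemma moebius_sum: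
  assumes "n > 0"
  shows "(\<Sum>d\<in>{d. d dvd n}. moebius d) = dirichlet_delta n"
proof -
  let ?S = "{d. d dvd n \<and> squarefree d}"
  let ?P = "prime_factors n"
  have "(\<Sum>d\<in>{d. d dvd n}. moebius d) = (\<Sum>d\<in>?S. moebius d)"
    using assms by (intro sum.mono_neutral_right) (auto simp: moebius_def)
  also have "\<dots> = (\<Sum>T\<in>Pow ?P. (-1) ^ card T)"
  proof (rule sum.reindex_bij_witness[where i="\<lambda>T. \<Prod>T" and j="prime_factors"])
    fix d assume d: "d \<in> ?S"
    then show "\<Prod>(prime_factors d) = d" using squarefree_prod_pf by blast
    show "prime_factors d \<in> Pow ?P" using d assms dvd_pos_nat[of n d]
      by (auto intro: dvd_trans simp: in_prime_factors_iff)
    show "(-1) ^ card (prime_factors d) = moebius d" using d assms dvd_pos_nat[of n d] by (auto simp: moebius_def)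
  next
    fix T assume T: "T \<in> Pow ?P"
    then have fin: "finite T" by (auto intro: finite_subset)
    have pr: "\<And>p. p \<in> T \<Longrightarrow> prime p" using T by auto
    then show "prime_factors (\<Prod>T) = T" using fin by (rule pf_prod_primes[rotated])
    have "\<Prod>T dvd (\<Prod>p\<in>T. p ^ multiplicity p n)"
      using T assms by (intro prod_dvd_prod) (auto simp: prime_factors_multiplicity)
    also have "\<dots> dvd (\<Prod>p\<in>?P. p ^ multiplicity p n)"
      using T by (intro prod_dvd_prod_subset) auto
    also have "\<dots> = n" using assms by (simp add: prod_prime_factors)
    finally have "\<Prod>T dvd n" .
    moreover have "squarefree (\<Prod>T)"
      using pr by (intro squarefree_prod_coprime) (auto simp: primes_coprime squarefree_prime)
    ultimately show "\<Prod>T \<in> ?S" by simp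
  qed
  also have "\<dots> = (\<Sum>T\<in>Pow ?P. (-1) ^ card T * (\<Prod>x\<in>T. 1) * (\<Prod>x\<in>?P-T. 1::int))"
    by simp
  also have "\<dots> = (\<Prod>x\<in>?P. 1 - 1)"
    by (rule prod_diff_conv_sum[symmetric]) simp
  also have "\<dots> = dirichlet_delta n"
  proof (cases "n = 1")
    case False
    then have "?P \<noteq> {}" using assms by (auto simp: prime_factorization_empty_iff)
    then show ?thesis using False by (auto simp: dirichlet_delta_def card_gt_0_iff)
  qed (simp add: dirichlet_delta_def)
  finally show ?thesis .
qed

lemma moebius_one: "A moebius * A one_fn = 1"
  by (rule apf_inject') (simp add: apf_A_times dconv_def one_fn_def moebius_sum)

lemma omega_conv: "A omega_fn = A one_fn * A prime_ind"
proof (rule apf_inject')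
  fix n :: nat assume n: "n > 0"
  have "apf (A one_fn * A prime_ind) n = dconv prime_ind one_fn n"
    by (simp add: apf_A_times dconv_comm)
  also have "\<dots> = (\<Sum>d\<in>{d. d dvd n}. if prime d then 1 else 0)"
    by (simp add: dconv_def prime_ind_def one_fn_def)
  also have "\<dots> = int (card {d. d dvd n \<and> prime d})"
    using n by (subst sum.If_cases) (auto simp: Int_def conj_commute)
  also have "{d. d dvd n \<and> prime d} = prime_factors n"
    using n by (auto simp: prime_factors_dvd)
  finally show "apf (A omega_fn) n = apf (A one_fn * A prime_ind) n"
    using n by (simp add: apf_A omega_fn_def)
qed

lemma vanish:
  assumes "\<And>d. real d \<le> V \<Longrightarrow> f d = 0" "V > 0"
  shows "real m \<le> V ^ Suc j \<Longrightarrow> dpow f (Suc j) m = 0"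
proof (induction j arbitrary: m)
  case 0
  show ?case
  proof (cases "m = 0")
    case False
    then show ?thesis using 0 assms dconv_delta_right[of m f] by simp
  qed simp
next
  case (Suc j)
  show ?case
  proof (cases "m = 0")
    case False
    have "dconv f (dpow f (Suc j)) m = (\<Sum>d\<in>{d. d dvd m}. 0)"
      unfolding dconv_def
    proof (rule sum.cong)
      fix d assume d: "d \<in> {d. d dvd m}"
      show "f d * dpow f (Suc j) (m div d) = 0"
      proof (cases "real d \<le> V")
        case True then show ?thesis using assms by simp
      next
        case False
        have "real (m div d) = real m / real d" using d by (simp add: real_of_nat_div)
        also have "\<dots> \<le> V ^ Suc (Suc j) / real d"
          using Suc.prems False assms by (intro divide_right_mono) auto
        also have "\<dots> \<le> V ^ Suc (Suc j) / V"
          using False assms by (intro divide_left_mono) auto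
        also have "\<dots> = V ^ Suc j" using assms by simp
        finally show ?thesis using Suc.IH by simp
      qed
    qed simp
    then show ?thesis by simp
  qed simp
qed



lemma ring_identity:
  fixes L M Q W P :: af
  assumes MO: "M * Q = 1" and W: "W = Q * P" and k: "k \<ge> 1"
  shows "(M - L) ^ k * Q ^ (k - 1) * W =
    P + (\<Sum>j = 1..k. of_int ((-1) ^ j * int (k choose j)) * (L ^ j * Q ^ (j - 1) * W))"
proof -
  have "(M - L) ^ k = (\<Sum>j\<le>k. of_nat (k choose j) * (-L) ^ j * M ^ (k - j))"
    using binomial_ring[of "-L" M k] by simp
  then have "(M - L) ^ k * Q ^ (k - 1) * W =
      (\<Sum>j\<le>k. of_nat (k choose j) * (-L) ^ j * M ^ (k - j) * Q ^ (k - 1) * W)"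
    by (simp add: sum_distrib_right)
  also have "{..k} = insert 0 {1..k}" by auto
  also have "(\<Sum>j\<in>insert 0 {1..k}. of_nat (k choose j) * (-L) ^ j * M ^ (k - j) * Q ^ (k - 1) * W)
      = M ^ k * Q ^ (k - 1) * W +
        (\<Sum>j = 1..k. of_nat (k choose j) * (-L) ^ j * M ^ (k - j) * Q ^ (k - 1) * W)"
    by (subst sum.insert) auto
  also have "M ^ k * Q ^ (k - 1) * W = P"
  proof -
    have "M ^ k = M * M ^ (k - 1)" using k by (cases k) auto
    from this have "M ^ k * Q ^ (k - 1) * W = M * (M * Q) ^ (k - 1) * W"
      by (simp only: mult.assoc power_mult_distrib)
    also have "\<dots> = M * W" using MO by simp
    also have "\<dots> = (M * Q) * P" by (simp only: W mult.assoc)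
    also have "\<dots> = P" by (simp only: MO mult_1_left)
    finally show ?thesis .
  qed
  also have "(\<Sum>j = 1..k. of_nat (k choose j) * (-L) ^ j * M ^ (k - j) * Q ^ (k - 1) * W) =
      (\<Sum>j = 1..k. of_int ((-1) ^ j * int (k choose j)) * (L ^ j * Q ^ (j - 1) * W))"
  proof (rule sum.cong)
    fix j assume j: "j \<in> {1..k}"
    then have "Q ^ (k - 1) = Q ^ (k - j) * Q ^ (j - 1)" by (simp add: power_add[symmetric])
    then have "M ^ (k - j) * Q ^ (k - 1) = (M * Q) ^ (k - j) * Q ^ (j - 1)"
      by (simp add: power_mult_distrib mult_ac)
    also have "\<dots> = Q ^ (j - 1)" using MO by simp
    finally have e: "M ^ (k - j) * Q ^ (k - 1) = Q ^ (j - 1)" .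
    have "of_nat (k choose j) * (-L) ^ j * M ^ (k - j) * Q ^ (k - 1) * W =
        of_nat (k choose j) * (-L) ^ j * (M ^ (k - j) * Q ^ (k - 1)) * W" by (simp add: mult_ac)
    also have "\<dots> = of_nat (k choose j) * (-1) ^ j * L ^ j * Q ^ (j - 1) * W"
      by (simp only: e power_minus[of L j] mult.assoc)
    finally show "of_nat (k choose j) * (-L) ^ j * M ^ (k - j) * Q ^ (k - 1) * W =
        of_int ((-1) ^ j * int (k choose j)) * (L ^ j * Q ^ (j - 1) * W)"
      by (simp only: of_int_mult of_int_power of_int_minus of_int_1 of_int_of_nat_eq mult.assoc mult.left_commute[of "of_nat (k choose j)"])
  qed simp
  finally show ?thesis .
qed



theorem lemma5p4:
  fixes k n :: nat and x V :: real
  assumes "k \<ge> 1" and "x \<ge> 1" and "V \<ge> x powr (1 / real k)"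
    and "n \<ge> 1" and "real n \<le> x"
  shows "prime_ind n =
    (\<Sum>j = 1..k. (-1) ^ (j - 1) * int (k choose j) *
       ((dpow (moebius_le V) j \<star> dpow one_fn (j - 1)) \<star> omega_fn) n)"
proof -
  define fg where "fg = (\<lambda>m. moebius m - moebius_le V m)"
  let ?L = "A (moebius_le V)" and ?M = "A moebius" and ?Q = "A one_fn"
    and ?W = "A omega_fn" and ?P = "A prime_ind"
  have xk: "(x powr (1 / real k)) ^ k = x"
    using assms by (simp add: powr_realpow[symmetric] powr_powr)
  have Vpos: "V > 0" using assms(2,3) by (smt (verit) powr_gt_zero)
  have Vk: "x \<le> V ^ k"
    using xk power_mono[OF assms(3), of k] assms(2) by (smt (verit) powr_ge_zero)
  have G: "?M - ?L = A fg" unfolding fg_def by (rule A_diff[symmetric])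
  have fg0: "fg d = 0" if "real d \<le> V" for d
    using that by (simp add: fg_def moebius_le_def)
  obtain k' where k': "k = Suc k'" using assms(1) by (cases k) auto
  have van: "apf (A fg ^ k) d = 0" if "d dvd n" for d
  proof -
    have "d > 0" using that assms(4) by (auto intro: Nat.gr0I)
    have "real d \<le> real n" using that assms(4) by (simp add: dvd_imp_le)
    then have "real d \<le> V ^ Suc k'" using Vk assms(5) k' by simp
    then have "dpow fg (Suc k') d = 0" using vanish[of V fg, OF fg0 Vpos] by blast
    moreover have "A fg ^ k = A (dpow fg (Suc k'))" by (simp only: A_dpow k')
    ultimately show ?thesis using \<open>d > 0\<close> by (simp add: apf_A)
  qed
  have h0: "apf ((?M - ?L) ^ k * ?Q ^ (k - 1) * ?W) n = 0"
    unfolding G mult.assoc apf_times_A dconv_def using van by simp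
  have hid: "(?M - ?L) ^ k * ?Q ^ (k - 1) * ?W =
    ?P + (\<Sum>j = 1..k. of_int ((-1) ^ j * int (k choose j)) * (?L ^ j * ?Q ^ (j - 1) * ?W))"
    by (rule ring_identity[OF moebius_one omega_conv assms(1)])
  have ht: "apf (of_int ((-1) ^ j * int (k choose j)) * (?L ^ j * ?Q ^ (j - 1) * ?W)) n =
     (-1) ^ j * int (k choose j) * ((dpow (moebius_le V) j \<star> dpow one_fn (j - 1)) \<star> omega_fn) n" for j
  proof -
    have "?L ^ j * ?Q ^ (j - 1) * ?W = A ((dpow (moebius_le V) j \<star> dpow one_fn (j - 1)) \<star> omega_fn)"
      by (simp only: A_dpow[symmetric] A_dconv)
    then show ?thesis unfolding apf_of_int_mult using assms(4) by (simp only: apf_A)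
  qed
  have "0 = prime_ind n + (\<Sum>j = 1..k. (-1) ^ j * int (k choose j) *
       ((dpow (moebius_le V) j \<star> dpow one_fn (j - 1)) \<star> omega_fn) n)"
  proof -
    have np: "n > 0" using assms(4) by simp
    show ?thesis using h0 unfolding hid apf_plus apf_sum ht apf_A[OF np] by simp
  qed
  moreover have "(\<Sum>j = 1..k. (-1) ^ j * int (k choose j) *
       ((dpow (moebius_le V) j \<star> dpow one_fn (j - 1)) \<star> omega_fn) n) =
     - (\<Sum>j = 1..k. (-1) ^ (j - 1) * int (k choose j) *
       ((dpow (moebius_le V) j \<star> dpow one_fn (j - 1)) \<star> omega_fn) n)"
    unfolding sum_negf[symmetric]
  proof (rule sum.cong)
    fix j :: nat assume "j \<in> {1..k}"
    then have "(-1::int) ^ j = - ((-1) ^ (j - 1))"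
      by (cases j) auto
    then show "(-1) ^ j * int (k choose j) * ((dpow (moebius_le V) j \<star> dpow one_fn (j - 1)) \<star> omega_fn) n =
      - ((-1) ^ (j - 1) * int (k choose j) * ((dpow (moebius_le V) j \<star> dpow one_fn (j - 1)) \<star> omega_fn) n)"
      by simp
  qed simp
  ultimately show ?thesis by linarith
qed

end
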